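(* Suppose $(f_m)$ is an orthonormal basis of $\mathcal{L}^2(I)$ and $\Lambda<1/2$. Then $(f_m*_T0)$ is a bounded Riesz basis of $\mathcal{L}^2(I)$.
   Context: Let $N\ge 2$, $I=[x_0,x_N]$, $\Delta: x_0<\dots<x_N$ a partition, $L_n(x)=a_nx+b_n$ affine with $L_n(x_0)=x_{n-1}$, $L_n(x_N)=x_n$, $I_1=[x_0,x_1]$, $I_n=(x_{n-1},x_n]$ for $n\ge2$, and $\alpha=(\alpha_1,\dots,\alpha_N)\in(\mathcal{L}^\infty(I))^N$ with $\Lambda:=\operatorname{ess\,sup}\{|\alpha_n(x)|:x\in I,n=1,\dots,N\}<1$. For $f,b\in\mathcal{L}^2(I)$, $f*_Tb$ is the unique fixed point in $\mathcal{L}^2(I)$ of the contraction $Tg(x):=f(x)+\alpha_n(L_n^{-1}(x))(g-b)(L_n^{-1}(x))$, $x\in I_n$; $0$ is the null function. A sequence $(x_m)$ is bounded if there are constants $0<k\le K$ with $k\le\|x_m\|_2\le K$ for all $m$. *)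

theory Defs
  imports "HOL-Analysis.Analysis" "HOL-Probability.Essential_Supremum"
begin

(* Real-valued L^2(I) on an interval I, functions compared almost everywhere w.r.t. Lebesgue measure on I *)

definition L2 :: "real set \<Rightarrow> (real \<Rightarrow> real) \<Rightarrow> bool" where
  "L2 I g \<longleftrightarrow> g \<in> borel_measurable (lebesgue_on I) \<and> integrable (lebesgue_on I) (\<lambda>t. (g t)^2)"

definition l2_inner :: "real set \<Rightarrow> (real \<Rightarrow> real) \<Rightarrow> (real \<Rightarrow> real) \<Rightarrow> real" where
  "l2_inner I g h = (LINT t|lebesgue_on I. g t * h t)"

definition l2_norm :: "real set \<Rightarrow> (real \<Rightarrow> real) \<Rightarrow> real" where
  "l2_norm I g = sqrt (LINT t|lebesgue_on I. (g t)^2)"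

definition orthonormal_basis :: "real set \<Rightarrow> (nat \<Rightarrow> real \<Rightarrow> real) \<Rightarrow> bool" where
  "orthonormal_basis I e \<longleftrightarrow>
     (\<forall>m. L2 I (e m)) \<and>
     (\<forall>m n. l2_inner I (e m) (e n) = (if m = n then 1 else 0)) \<and>
     (\<forall>g. L2 I g \<longrightarrow>
        (\<lambda>n. l2_norm I (\<lambda>t. g t - (\<Sum>m<n. l2_inner I g (e m) * e m t))) \<longlonglongrightarrow> 0)"

definition bounded_op :: "real set \<Rightarrow> ((real \<Rightarrow> real) \<Rightarrow> (real \<Rightarrow> real)) \<Rightarrow> bool" where
  "bounded_op I U \<longleftrightarrow>
     (\<forall>g. L2 I g \<longrightarrow> L2 I (U g)) \<and>
     (\<forall>g h a b. L2 I g \<longrightarrow> L2 I h \<longrightarrow>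
        (AE t in lebesgue_on I. U (\<lambda>s. a * g s + b * h s) t = a * U g t + b * U h t)) \<and>
     (\<exists>C. \<forall>g. L2 I g \<longrightarrow> l2_norm I (U g) \<le> C * l2_norm I g)"

definition riesz_basis :: "real set \<Rightarrow> (nat \<Rightarrow> real \<Rightarrow> real) \<Rightarrow> bool" where
  "riesz_basis I y \<longleftrightarrow>
     (\<exists>e U V. orthonormal_basis I e \<and> bounded_op I U \<and> bounded_op I V \<and>
        (\<forall>g. L2 I g \<longrightarrow> (AE t in lebesgue_on I. V (U g) t = g t)) \<and>
        (\<forall>g. L2 I g \<longrightarrow> (AE t in lebesgue_on I. U (V g) t = g t)) \<and>
        (\<forall>m. AE t in lebesgue_on I. U (e m) t = y m t))"

definition bounded_seq :: "real set \<Rightarrow> (nat \<Rightarrow> real \<Rightarrow> real) \<Rightarrow> bool" where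
  "bounded_seq I y \<longleftrightarrow> (\<exists>k K. 0 < k \<and> k \<le> K \<and> (\<forall>m. k \<le> l2_norm I (y m) \<and> l2_norm I (y m) \<le> K))"

(* partition data: x 0 < ... < x N, I = [x 0, x N] *)
definition Iseg :: "(nat \<Rightarrow> real) \<Rightarrow> nat \<Rightarrow> real set" where
  "Iseg x n = (if n = 1 then {x 0 .. x 1} else {x (n - 1) <.. x n})"

(* L_n(t) = a_n t + b_n with L_n(x_0) = x_{n-1}, L_n(x_N) = x_n, and its inverse *)
definition Lmap :: "(nat \<Rightarrow> real) \<Rightarrow> nat \<Rightarrow> nat \<Rightarrow> real \<Rightarrow> real" where
  "Lmap x N n t = x (n - 1) + (x n - x (n - 1)) / (x N - x 0) * (t - x 0)"

definition Linv :: "(nat \<Rightarrow> real) \<Rightarrow> nat \<Rightarrow> nat \<Rightarrow> real \<Rightarrow> real" where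
  "Linv x N n s = x 0 + (x N - x 0) / (x n - x (n - 1)) * (s - x (n - 1))"

definition fractal_T ::
  "(nat \<Rightarrow> real) \<Rightarrow> nat \<Rightarrow> (nat \<Rightarrow> real \<Rightarrow> real) \<Rightarrow> (real \<Rightarrow> real) \<Rightarrow> (real \<Rightarrow> real)
     \<Rightarrow> (real \<Rightarrow> real) \<Rightarrow> real \<Rightarrow> real" where
  "fractal_T x N \<alpha> f b g t = f t +
     (\<Sum>n\<in>{1..N}. if t \<in> Iseg x n
        then \<alpha> n (Linv x N n t) * (g (Linv x N n t) - b (Linv x N n t)) else 0)"

(* h is (a representative of) f *_T b: a fixed point of T in L^2(I) *)
definition is_fractal ::
  "(nat \<Rightarrow> real) \<Rightarrow> nat \<Rightarrow> (nat \<Rightarrow> real \<Rightarrow> real) \<Rightarrow> (real \<Rightarrow> real) \<Rightarrow> (real \<Rightarrow> real)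
     \<Rightarrow> (real \<Rightarrow> real) \<Rightarrow> bool" where
  "is_fractal x N \<alpha> f b h \<longleftrightarrow> L2 {x 0 .. x N} h \<and>
     (AE t in lebesgue_on {x 0 .. x N}. h t = fractal_T x N \<alpha> f b h t)"

end

theory Submission
  imports Defs
begin

definition Aop :: "(nat \<Rightarrow> real) \<Rightarrow> nat \<Rightarrow> (nat \<Rightarrow> real \<Rightarrow> real) \<Rightarrow> (real \<Rightarrow> real) \<Rightarrow> real \<Rightarrow> real" where
  "Aop x N \<alpha> g t = (\<Sum>n\<in>{1..N}. if t \<in> Iseg x n then \<alpha> n (Linv x N n t) * g (Linv x N n t) else 0)"

lemma real_affine_meas: "(c::real) \<noteq> 0 \<Longrightarrow> (\<lambda>x::real. t + c * x) \<in> lebesgue \<rightarrow>\<^sub>M lebesgue"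
  using lebesgue_affine_measurable[where c= "\<lambda>x::real. c" and t=t] by simp

lemma cs_series:
  fixes c :: "nat \<Rightarrow> real"
  assumes s: "summable (\<lambda>k. 2^k * (c k)\<^sup>2)"
  shows "summable c" "(suminf c)\<^sup>2 \<le> 2 * (\<Sum>k. 2^k * (c k)\<^sup>2)"
proof -
  have b: "norm (c k) \<le> ((1/2)^k + 2^k * (c k)\<^sup>2) / 2" for k
  proof -
    define u :: real where "u = 2^k"
    have u: "u > 0" by (simp add: u_def)
    have a: "(1/2::real)^k = 1 / u" by (simp add: u_def power_one_over)
    have "0 \<le> (1 - u * \<bar>c k\<bar>)\<^sup>2" by simp
    then have "2 * (u * \<bar>c k\<bar>) \<le> 1 + (u * \<bar>c k\<bar>)\<^sup>2" by (simp add: power2_diff)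
    then have "2 * \<bar>c k\<bar> \<le> 1 / u + u * (c k)\<^sup>2" using u
      by (simp add: field_simps power2_eq_square)
    then show ?thesis unfolding a u_def[symmetric] by simp
  qed
  have sg: "summable (\<lambda>k. ((1/2::real)^k + 2^k * (c k)\<^sup>2) / 2)"
    by (intro summable_divide summable_add s) (simp add: summable_geometric)
  show sc: "summable c"
    by (rule summable_comparison_test[OF _ sg]) (use b in auto)
  have part: "(\<Sum>k<n. c k)\<^sup>2 \<le> 2 * (\<Sum>k. 2^k * (c k)\<^sup>2)" for n
  proof -
    have e: "sqrt ((1/2)^k) * (sqrt (2^k) * c k) = c k" for k
    proof -
      have "sqrt ((1/2::real)^k) * sqrt (2^k) = sqrt ((1/2 * 2)^k)"
        by (simp only: real_sqrt_mult[symmetric] power_mult_distrib[symmetric])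
      then show ?thesis by (simp add: mult.assoc[symmetric])
    qed
    have "(\<Sum>k<n. c k)\<^sup>2 = (\<Sum>k<n. sqrt ((1/2)^k) * (sqrt (2^k) * c k))\<^sup>2" by (simp add: e)
    also have "\<dots> \<le> (\<Sum>k<n. (sqrt ((1/2)^k))\<^sup>2) * (\<Sum>k<n. (sqrt (2^k) * c k)\<^sup>2)"
      by (rule Cauchy_Schwarz_ineq_sum)
    also have "\<dots> = (\<Sum>k<n. (1/2::real)^k) * (\<Sum>k<n. 2^k * (c k)\<^sup>2)"
      by (simp add: power_mult_distrib)
    also have "\<dots> \<le> 2 * (\<Sum>k. 2^k * (c k)\<^sup>2)"
    proof (rule mult_mono)
      have "(\<Sum>k<n. (1/2::real)^k) \<le> (\<Sum>k. (1/2)^k)"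
        by (rule sum_le_suminf) (auto simp: summable_geometric)
      then show "(\<Sum>k<n. (1/2::real)^k) \<le> 2" by (simp add: suminf_geometric)
      show "(\<Sum>k<n. 2^k * (c k)\<^sup>2) \<le> (\<Sum>k. 2^k * (c k)\<^sup>2)"
        by (rule sum_le_suminf[OF s]) auto
    qed (auto intro: sum_nonneg)
    finally show ?thesis .
  qed
  have "(\<lambda>n. (\<Sum>k<n. c k)\<^sup>2) \<longlonglongrightarrow> (suminf c)\<^sup>2"
    by (intro tendsto_power summable_LIMSEQ sc)
  then show "(suminf c)\<^sup>2 \<le> 2 * (\<Sum>k. 2^k * (c k)\<^sup>2)"
    by (rule LIMSEQ_le_const2) (use part in auto)
qed
definition Uop :: "(nat \<Rightarrow> real) \<Rightarrow> nat \<Rightarrow> (nat \<Rightarrow> real \<Rightarrow> real) \<Rightarrow> (real \<Rightarrow> real) \<Rightarrow> real \<Rightarrow> real" where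
  "Uop x N \<alpha> g t = (\<Sum>k. ((Aop x N \<alpha>) ^^ k) g t)"

definition Vop :: "(nat \<Rightarrow> real) \<Rightarrow> nat \<Rightarrow> (nat \<Rightarrow> real \<Rightarrow> real) \<Rightarrow> (real \<Rightarrow> real) \<Rightarrow> real \<Rightarrow> real" where
  "Vop x N \<alpha> g t = g t - Aop x N \<alpha> g t"

locale fsetting =
  fixes N :: nat and x :: "nat \<Rightarrow> real" and \<alpha> :: "nat \<Rightarrow> real \<Rightarrow> real"
  assumes N2: "N \<ge> 2" and incr: "\<And>i. i < N \<Longrightarrow> x i < x (Suc i)"
    and \<alpha>meas: "\<And>n. n \<in> {1..N} \<Longrightarrow> \<alpha> n \<in> borel_measurable (lebesgue_on {x 0 .. x N})"
    and \<alpha>bnd: "\<And>n. n \<in> {1..N} \<Longrightarrow> AE t in lebesgue_on {x 0..x N}. \<bar>\<alpha> n t\<bar> \<le> 1/2"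
begin

abbreviation "I \<equiv> {x 0 .. x N}"
abbreviation "M \<equiv> lebesgue_on I"
abbreviation "A \<equiv> Aop x N \<alpha>"
abbreviation "L \<equiv> Linv x N"
abbreviation "U \<equiv> Uop x N \<alpha>"
abbreviation "V \<equiv> Vop x N \<alpha>"

lemma x_less: "i < j \<Longrightarrow> j \<le> N \<Longrightarrow> x i < x j"
proof (induction j)
  case 0 then show ?case by simp
next
  case (Suc j)
  then show ?case using incr[of j] by (cases "i = j") auto
qed

lemma x_le: "i \<le> j \<Longrightarrow> j \<le> N \<Longrightarrow> x i \<le> x j"
  using x_less[of i j] by (cases "i = j") auto

lemma n_less: "n \<in> {1..N} \<Longrightarrow> x (n - 1) < x n"
  using x_less[of "n-1" n] by auto

lemma ab_less: "x 0 < x N"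
  using x_less[of 0 N] N2 by auto

lemma Iseg_sub: "n \<in> {1..N} \<Longrightarrow> Iseg x n \<subseteq> {x (n-1) .. x n}"
  by (auto simp: Iseg_def)

lemma Iseg_sup: "n \<in> {1..N} \<Longrightarrow> {x (n-1) <.. x n} \<subseteq> Iseg x n"
  by (auto simp: Iseg_def)

lemma Iseg_I: "n \<in> {1..N} \<Longrightarrow> Iseg x n \<subseteq> I"
  using Iseg_sub[of n] x_le[of 0 "n-1"] x_le[of n N] by fastforce

lemma Iseg_sets[measurable]: "Iseg x n \<in> sets lebesgue"
  by (auto simp: Iseg_def)

lemma Iseg_disj: "n \<in> {1..N} \<Longrightarrow> m \<in> {1..N} \<Longrightarrow> t \<in> Iseg x n \<Longrightarrow> t \<in> Iseg x m \<Longrightarrow> n = m"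
proof (rule ccontr)
  assume nm: "n \<in> {1..N}" "m \<in> {1..N}" "t \<in> Iseg x n" "t \<in> Iseg x m" "n \<noteq> m"
  { fix p q assume pq: "p \<in> {1..N}" "q \<in> {1..N}" "t \<in> Iseg x p" "t \<in> Iseg x q" "p < q"
    then have "t \<le> x p" using Iseg_sub[of p] by auto
    also have "x p \<le> x (q - 1)" using pq by (intro x_le) auto
    finally have "t \<le> x (q - 1)" .
    moreover have "q \<noteq> 1" using pq by auto
    ultimately have False using pq(4) by (auto simp: Iseg_def) }
  then show False using nm by (metis linorder_neq_iff)
qed

definition kk :: "nat \<Rightarrow> real" where "kk n = (x N - x 0) / (x n - x (n - 1))"

lemma kk_pos: "n \<in> {1..N} \<Longrightarrow> kk n > 0"
  using n_less ab_less by (auto simp: kk_def)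

lemma L_eq: "L n t = (x 0 - kk n * x (n-1)) + kk n * t"
  unfolding Linv_def kk_def[symmetric] by (simp add: algebra_simps)

lemma L_in: assumes "n \<in> {1..N}" "t \<in> {x (n-1) .. x n}" shows "L n t \<in> I"
proof -
  have d: "x n - x (n-1) > 0" using n_less[OF assms(1)] by simp
  have "0 \<le> (x N - x 0) / (x n - x (n - 1)) * (t - x (n-1))"
    using assms ab_less d by (intro mult_nonneg_nonneg) auto
  moreover have "(x N - x 0) / (x n - x (n - 1)) * (t - x (n-1)) \<le> (x N - x 0) / (x n - x (n - 1)) * (x n - x (n-1))"
    using assms ab_less d by (intro mult_left_mono) auto
  ultimately show ?thesis using d by (simp add: Linv_def)
qed

lemma L_in_Iseg: "n \<in> {1..N} \<Longrightarrow> t \<in> Iseg x n \<Longrightarrow> L n t \<in> I"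
  using L_in Iseg_sub by blast

lemma L_in_rev: assumes "n \<in> {1..N}" "L n t \<in> I" shows "t \<in> {x (n-1) .. x n}"
proof -
  have d: "x n - x (n-1) > 0" using n_less[OF assms(1)] by simp
  have k: "kk n > 0" using kk_pos assms by auto
  from assms(2) have "0 \<le> kk n * (t - x (n-1))" "kk n * (t - x (n-1)) \<le> x N - x 0"
    unfolding Linv_def kk_def[symmetric] by auto
  note h = this
  have e: "kk n * (x n - x (n-1)) = x N - x 0" using d by (simp add: kk_def)
  have "0 \<le> t - x (n-1)" using k h(1) by (simp add: zero_le_mult_iff)
  moreover have "t - x (n-1) \<le> x n - x (n-1)" using h(2) e k
    by (metis mult_le_cancel_left_pos)
  ultimately show ?thesis by auto
qed

lemma meas_comp:
  fixes F :: "real \<Rightarrow> real"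
  assumes n: "n \<in> {1..N}" and F: "F \<in> borel_measurable M"
  shows "(\<lambda>t. if t \<in> Iseg x n then F (L n t) else 0) \<in> borel_measurable M"
proof -
  define G where "G s = (if s \<in> I then F s else 0)" for s
  have G: "G \<in> borel_measurable lebesgue"
    unfolding G_def by (rule borel_measurable_if_I[OF F]) auto
  have aff: "(\<lambda>t. L n t) \<in> lebesgue \<rightarrow>\<^sub>M lebesgue"
    unfolding L_eq using real_affine_meas kk_pos[OF n] by simp
  have "(\<lambda>t. if t \<in> Iseg x n then G (L n t) else 0) \<in> borel_measurable lebesgue"
    using measurable_compose[OF aff G] by measurable
  moreover have "(\<lambda>t. if t \<in> Iseg x n then G (L n t) else 0) = (\<lambda>t. if t \<in> Iseg x n then F (L n t) else 0)"
    using L_in_Iseg[OF n] by (auto simp: G_def fun_eq_iff)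
  ultimately show ?thesis using measurable_restrict_space1 by metis
qed

lemma change_var:
  fixes \<phi> :: "real \<Rightarrow> ennreal"
  assumes n: "n \<in> {1..N}" and \<phi>: "\<phi> \<in> borel_measurable M"
  shows "(\<integral>\<^sup>+t. (if t \<in> Iseg x n then \<phi> (L n t) else 0) \<partial>M) = ennreal (1 / kk n) * (\<integral>\<^sup>+s. \<phi> s \<partial>M)"
proof -
  define \<Phi> where "\<Phi> s = \<phi> s * indicator I s" for s
  have \<Phi>[measurable]: "\<Phi> \<in> borel_measurable lebesgue"
    unfolding \<Phi>_def using \<phi> borel_measurable_restrict_space_iff_ennreal[of I lebesgue \<phi>] by auto
  have k: "kk n > 0" using kk_pos n by auto
  have "(\<integral>\<^sup>+t. (if t \<in> Iseg x n then \<phi> (L n t) else 0) \<partial>M)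
      = (\<integral>\<^sup>+t. (if t \<in> Iseg x n then \<phi> (L n t) else 0) * indicator I t \<partial>lebesgue)"
    by (subst nn_integral_restrict_space) auto
  also have "\<dots> = (\<integral>\<^sup>+t. \<Phi> (L n t) \<partial>lebesgue)"
  proof (rule nn_integral_cong_AE)
    have "AE t in lebesgue. t \<noteq> x (n-1)"
      by (rule AE_completion[OF AE_lborel_singleton])
    then show "AE t in lebesgue. (if t \<in> Iseg x n then \<phi> (L n t) else 0) * indicator I t = \<Phi> (L n t)"
    proof eventually_elim
      case (elim t)
      show ?case
      proof (cases "t \<in> Iseg x n")
        case True
        then show ?thesis using Iseg_I[OF n] L_in_Iseg[OF n] by (auto simp: \<Phi>_def indicator_def)
      next
        case False
        then have "t \<notin> {x (n-1) <.. x n}" using Iseg_sup[OF n] by blast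
        then have "t \<notin> {x (n-1) .. x n}" using elim by auto
        then have "L n t \<notin> I" using L_in_rev[OF n] by blast
        then show ?thesis using False by (auto simp: \<Phi>_def)
      qed
    qed
  qed
  also have "\<dots> = ennreal (1 / kk n) * (ennreal (kk n) * (\<integral>\<^sup>+t. \<Phi> (L n t) \<partial>lebesgue))"
    using k by (simp add: ennreal_mult''[symmetric] mult.assoc[symmetric] del: ennreal_mult'')
  also have "ennreal (kk n) * (\<integral>\<^sup>+t. \<Phi> (L n t) \<partial>lebesgue) = (\<integral>\<^sup>+s. \<Phi> s \<partial>lebesgue)"
    unfolding L_eq using nn_integral_real_affine_lebesgue[OF \<Phi>, of "kk n" "x 0 - kk n * x (n-1)"] k by simp
  also have "(\<integral>\<^sup>+s. \<Phi> s \<partial>lebesgue) = (\<integral>\<^sup>+s. \<phi> s \<partial>M)"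
    unfolding \<Phi>_def by (subst nn_integral_restrict_space) auto
  finally show ?thesis .
qed


definition Q :: "(real \<Rightarrow> real) \<Rightarrow> ennreal" where
  "Q g = (\<integral>\<^sup>+t. ennreal ((g t)\<^sup>2) \<partial>M)"

lemma L2_iff: "L2 I g \<longleftrightarrow> g \<in> borel_measurable M \<and> Q g < \<infinity>"
proof
  assume "L2 I g"
  then show "g \<in> borel_measurable M \<and> Q g < \<infinity>"
    unfolding L2_def Q_def integrable_iff_bounded by simp
next
  assume h: "g \<in> borel_measurable M \<and> Q g < \<infinity>"
  then have [measurable]: "g \<in> borel_measurable M" by simp
  show "L2 I g"
    unfolding L2_def Q_def integrable_iff_bounded using h by (simp add: Q_def)
qed

lemma l2_norm_Q: "g \<in> borel_measurable M \<Longrightarrow> l2_norm I g = sqrt (enn2real (Q g))"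
  unfolding l2_norm_def Q_def by (subst integral_eq_nn_integral) auto

lemma meas_A[measurable]: assumes g: "g \<in> borel_measurable M" shows "A g \<in> borel_measurable M"
proof -
  have "(\<lambda>t. \<Sum>n\<in>{1..N}. if t \<in> Iseg x n then (\<lambda>s. \<alpha> n s * g s) (L n t) else 0) \<in> borel_measurable M"
  proof (rule borel_measurable_sum)
    fix n assume n: "n \<in> {1..N}"
    have "(\<lambda>s. \<alpha> n s * g s) \<in> borel_measurable M" using \<alpha>meas[OF n] g by measurable
    then show "(\<lambda>t. if t \<in> Iseg x n then (\<lambda>s. \<alpha> n s * g s) (L n t) else 0) \<in> borel_measurable M"
      by (rule meas_comp[OF n])
  qed
  then show ?thesis unfolding Aop_def by simp
qed

lemma meas_Ak[measurable]: "g \<in> borel_measurable M \<Longrightarrow> (A ^^ k) g \<in> borel_measurable M"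
  by (induction k) auto

lemma sq_sum_disj:
  fixes f :: "'i \<Rightarrow> real"
  assumes "finite S" and u: "\<And>i j. i \<in> S \<Longrightarrow> j \<in> S \<Longrightarrow> P i \<Longrightarrow> P j \<Longrightarrow> i = j"
  shows "(\<Sum>i\<in>S. if P i then f i else 0)\<^sup>2 = (\<Sum>i\<in>S. if P i then (f i)\<^sup>2 else 0)"
proof (cases "\<exists>i\<in>S. P i")
  case True
  then obtain i where i: "i \<in> S" "P i" by blast
  have e1: "(\<Sum>j\<in>S. if P j then f j else 0) = (\<Sum>j\<in>S. if j = i then f i else 0)"
    using u i by (intro sum.cong) auto
  have e2: "(\<Sum>j\<in>S. if P j then (f j)\<^sup>2 else 0) = (\<Sum>j\<in>S. if j = i then (f i)\<^sup>2 else 0)"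
    using u i by (intro sum.cong) auto
  show ?thesis unfolding e1 e2 using i assms(1) by simp
next
  case False
  then show ?thesis by simp
qed

lemma change_var':
  fixes F :: "real \<Rightarrow> real"
  assumes n: "n \<in> {1..N}" and F: "F \<in> borel_measurable M"
  shows "(\<integral>\<^sup>+t. ennreal (if t \<in> Iseg x n then F (L n t) else 0) \<partial>M) = ennreal (1 / kk n) * (\<integral>\<^sup>+s. ennreal (F s) \<partial>M)"
proof -
  have "(\<lambda>s. ennreal (F s)) \<in> borel_measurable M" using F by measurable
  have e: "(\<lambda>t. ennreal (if t \<in> Iseg x n then F (L n t) else 0)) = (\<lambda>t. if t \<in> Iseg x n then ennreal (F (L n t)) else 0)"
    by (auto simp: fun_eq_iff)
  show ?thesis unfolding e by (rule change_var[OF n \<open>(\<lambda>s. ennreal (F s)) \<in> borel_measurable M\<close>])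
qed

lemma sum_kk: "(\<Sum>n\<in>{1..N}. 1 / kk n) = 1"
proof -
  have tel: "(\<Sum>n\<in>{1..m}. x n - x (n - 1)) = x m - x 0" for m
    by (induction m) (auto simp: sum.cl_ivl_Suc)
  have "(\<Sum>n\<in>{1..N}. 1 / kk n) = (\<Sum>n\<in>{1..N}. (x n - x (n - 1)) / (x N - x 0))"
    by (intro sum.cong) (auto simp: kk_def)
  also have "\<dots> = (\<Sum>n\<in>{1..N}. x n - x (n - 1)) / (x N - x 0)"
    by (simp add: sum_divide_distrib)
  also have "\<dots> = (x N - x 0) / (x N - x 0)"
    by (simp only: tel)
  also have "\<dots> = 1" using ab_less by simp
  finally show ?thesis .
qed

lemma A_contr: assumes g[measurable]: "g \<in> borel_measurable M"
  shows "Q (A g) \<le> ennreal (1/4) * Q g"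
proof -
  have pt: "ennreal ((A g t)\<^sup>2) = (\<Sum>n\<in>{1..N}. ennreal (if t \<in> Iseg x n then (\<lambda>s. (\<alpha> n s * g s)\<^sup>2) (L n t) else 0))" for t
  proof -
    have "(A g t)\<^sup>2 = (\<Sum>n\<in>{1..N}. if t \<in> Iseg x n then (\<alpha> n (L n t) * g (L n t))\<^sup>2 else 0)"
      unfolding Aop_def by (rule sq_sum_disj) (auto intro: Iseg_disj)
    then show ?thesis by (subst sum_ennreal) auto
  qed
  have "Q (A g) = (\<integral>\<^sup>+t. (\<Sum>n\<in>{1..N}. ennreal (if t \<in> Iseg x n then (\<lambda>s. (\<alpha> n s * g s)\<^sup>2) (L n t) else 0)) \<partial>M)"
    unfolding Q_def pt ..
  also have "\<dots> = (\<Sum>n\<in>{1..N}. (\<integral>\<^sup>+t. ennreal (if t \<in> Iseg x n then (\<lambda>s. (\<alpha> n s * g s)\<^sup>2) (L n t) else 0) \<partial>M))"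
  proof (rule nn_integral_sum)
    fix n assume n: "n \<in> {1..N}"
    have "(\<lambda>s. (\<alpha> n s * g s)\<^sup>2) \<in> borel_measurable M" using \<alpha>meas[OF n] by measurable
    from meas_comp[OF n this] show "(\<lambda>t. ennreal (if t \<in> Iseg x n then (\<lambda>s. (\<alpha> n s * g s)\<^sup>2) (L n t) else 0)) \<in> borel_measurable M"
      by measurable
  qed
  also have "\<dots> = (\<Sum>n\<in>{1..N}. ennreal (1 / kk n) * (\<integral>\<^sup>+s. ennreal ((\<alpha> n s * g s)\<^sup>2) \<partial>M))"
  proof (rule sum.cong)
    fix n assume n: "n \<in> {1..N}"
    have "(\<lambda>s. (\<alpha> n s * g s)\<^sup>2) \<in> borel_measurable M" using \<alpha>meas[OF n] by measurable
    from change_var'[OF n this]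
    show "(\<integral>\<^sup>+t. ennreal (if t \<in> Iseg x n then (\<lambda>s. (\<alpha> n s * g s)\<^sup>2) (L n t) else 0) \<partial>M) =
      ennreal (1 / kk n) * (\<integral>\<^sup>+s. ennreal ((\<alpha> n s * g s)\<^sup>2) \<partial>M)" by simp
  qed simp
  also have "\<dots> \<le> (\<Sum>n\<in>{1..N}. ennreal (1 / kk n) * (ennreal (1/4) * Q g))"
  proof (rule sum_mono)
    fix n assume n: "n \<in> {1..N}"
    have "(\<integral>\<^sup>+s. ennreal ((\<alpha> n s * g s)\<^sup>2) \<partial>M) \<le> (\<integral>\<^sup>+s. ennreal (1/4) * ennreal ((g s)\<^sup>2) \<partial>M)"
    proof (rule nn_integral_mono_AE)
      show "AE s in M. ennreal ((\<alpha> n s * g s)\<^sup>2) \<le> ennreal (1/4) * ennreal ((g s)\<^sup>2)"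
        using \<alpha>bnd[OF n]
      proof eventually_elim
        case (elim s)
        have "(\<alpha> n s)\<^sup>2 \<le> (1/2)\<^sup>2" using elim by (metis abs_ge_zero power2_abs power_mono)
        then have "(\<alpha> n s)\<^sup>2 * (g s)\<^sup>2 \<le> (1/2)\<^sup>2 * (g s)\<^sup>2" by (rule mult_right_mono) simp
        then have "(\<alpha> n s * g s)\<^sup>2 \<le> 1/4 * (g s)\<^sup>2"
          by (simp add: power_mult_distrib power_divide)
        then show ?case by (simp add: ennreal_mult[symmetric])
      qed
    qed
    also have "\<dots> = ennreal (1/4) * Q g" unfolding Q_def by (rule nn_integral_cmult) measurable
    finally show "ennreal (1 / kk n) * (\<integral>\<^sup>+s. ennreal ((\<alpha> n s * g s)\<^sup>2) \<partial>M) \<le> ennreal (1 / kk n) * (ennreal (1/4) * Q g)"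
      by (rule mult_left_mono) simp
  qed
  also have "\<dots> = ennreal (\<Sum>n\<in>{1..N}. 1 / kk n) * (ennreal (1/4) * Q g)"
    by (subst sum_ennreal[symmetric]) (auto simp: sum_distrib_right kk_pos less_imp_le)
  also have "\<dots> = ennreal (1/4) * Q g" by (simp only: sum_kk) simp
  finally show ?thesis .
qed

lemma Q_Ak: assumes g[measurable]: "g \<in> borel_measurable M"
  shows "Q ((A ^^ k) g) \<le> ennreal ((1/4)^k) * Q g"
proof (induction k)
  case 0 then show ?case by simp
next
  case (Suc k)
  have "Q ((A ^^ Suc k) g) = Q (A ((A ^^ k) g))" by simp
  also have "\<dots> \<le> ennreal (1/4) * Q ((A ^^ k) g)" by (rule A_contr) measurable
  also have "\<dots> \<le> ennreal (1/4) * (ennreal ((1/4)^k) * Q g)" by (rule mult_left_mono[OF Suc]) simp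
  also have "\<dots> = ennreal (1/4 * (1/4)^k) * Q g" by (subst ennreal_mult) (simp_all add: mult.assoc)
  also have "\<dots> = ennreal ((1/4)^Suc k) * Q g" by simp
  finally show ?case .
qed

lemma AE_transfer: assumes "AE s in M. P s"
  shows "AE t in M. \<forall>n\<in>{1..N}. t \<in> Iseg x n \<longrightarrow> P (L n t)"
proof -
  obtain Z where Z: "{s \<in> space M. \<not> P s} \<subseteq> Z" "emeasure M Z = 0" and Zs[measurable]: "Z \<in> sets M"
    using assms by (rule AE_E)
  show ?thesis
  proof (rule AE_finite_allI)
    fix n assume n: "n \<in> {1..N}"
    have Fm: "(indicator Z :: real \<Rightarrow> real) \<in> borel_measurable M" by measurable
    have "(\<integral>\<^sup>+t. ennreal (if t \<in> Iseg x n then indicator Z (L n t) else 0) \<partial>M) = ennreal (1 / kk n) * (\<integral>\<^sup>+s. ennreal (indicator Z s) \<partial>M)"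
      by (rule change_var'[OF n Fm])
    also have "\<dots> = 0" using Z by (simp add: nn_integral_indicator ennreal_indicator)
    finally have "AE t in M. ennreal (if t \<in> Iseg x n then indicator Z (L n t) else 0) = 0"
      using meas_comp[OF n Fm] by (subst (asm) nn_integral_0_iff_AE) auto
    then show "AE t in M. t \<in> Iseg x n \<longrightarrow> P (L n t)"
    proof eventually_elim
      case (elim t)
      show ?case
      proof
        assume t: "t \<in> Iseg x n"
        then have "L n t \<notin> Z" using elim by (auto simp: indicator_def split: if_splits)
        moreover have "L n t \<in> space M" using L_in_Iseg[OF n t] by simp
        ultimately show "P (L n t)" using Z(1) by auto
      qed
    qed
  qed simp
qed

lemma A_lin: "A (\<lambda>s. p * g s + q * h s) t = p * A g t + q * A h t"
  unfolding Aop_def sum_distrib_left sum.distrib[symmetric] by (rule sum.cong) (auto simp: algebra_simps)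

lemma A_diff: "A (\<lambda>s. g s - h s) t = A g t - A h t"
  unfolding Aop_def sum_subtractf[symmetric] by (rule sum.cong) (auto simp: algebra_simps)

lemma Ak_lin: "(A ^^ k) (\<lambda>s. p * g s + q * h s) t = p * (A ^^ k) g t + q * (A ^^ k) h t"
proof (induction k arbitrary: t)
  case 0 then show ?case by simp
next
  case (Suc k)
  have "(A ^^ k) (\<lambda>s. p * g s + q * h s) = (\<lambda>s. p * (A ^^ k) g s + q * (A ^^ k) h s)"
    using Suc by auto
  then show ?case by (simp add: A_lin)
qed

lemma Ak_diff: "(A ^^ k) (\<lambda>s. g s - h s) t = (A ^^ k) g t - (A ^^ k) h t"
proof (induction k arbitrary: t)
  case 0 then show ?case by simp
next
  case (Suc k)
  have "(A ^^ k) (\<lambda>s. g s - h s) = (\<lambda>s. (A ^^ k) g s - (A ^^ k) h s)"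
    using Suc by auto
  then show ?case by (simp add: A_diff)
qed


lemma meas_S: assumes g: "g \<in> borel_measurable M"
  shows "(\<lambda>t. \<Sum>k. ennreal (2^k * ((A ^^ k) g t)\<^sup>2)) \<in> borel_measurable M"
proof (rule borel_measurable_suminf_order)
  fix k
  have "(A ^^ k) g \<in> borel_measurable M" by (rule meas_Ak[OF g])
  then show "(\<lambda>t. ennreal (2^k * ((A ^^ k) g t)\<^sup>2)) \<in> borel_measurable M"
    by measurable
qed

lemma series_main:
  assumes g[measurable]: "g \<in> borel_measurable M" and gQ: "Q g < \<infinity>"
  shows "(\<integral>\<^sup>+t. (\<Sum>k. ennreal (2^k * ((A ^^ k) g t)\<^sup>2)) \<partial>M) \<le> 2 * Q g"
    and "AE t in M. summable (\<lambda>k. (A ^^ k) g t) \<and>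
           ennreal ((\<Sum>k. (A ^^ k) g t)\<^sup>2) \<le> 2 * (\<Sum>k. ennreal (2^k * ((A ^^ k) g t)\<^sup>2))"
proof -
  have "(\<integral>\<^sup>+t. (\<Sum>k. ennreal (2^k * ((A ^^ k) g t)\<^sup>2)) \<partial>M) = (\<Sum>k. (\<integral>\<^sup>+t. ennreal (2^k * ((A ^^ k) g t)\<^sup>2) \<partial>M))"
    by (rule nn_integral_suminf) (use meas_Ak[OF g] in measurable)
  also have "\<dots> = (\<Sum>k. ennreal (2^k) * Q ((A ^^ k) g))"
    unfolding Q_def by (subst ennreal_mult) (auto intro!: suminf_cong nn_integral_cmult)
  also have "\<dots> \<le> (\<Sum>k. ennreal ((1/2)^k) * Q g)"
  proof (rule suminf_le)
    fix k
    have "ennreal (2^k) * Q ((A ^^ k) g) \<le> ennreal (2^k) * (ennreal ((1/4)^k) * Q g)"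
      by (rule mult_left_mono[OF Q_Ak[OF g]]) simp
    also have "\<dots> = ennreal (2^k * (1/4)^k) * Q g" by (subst ennreal_mult) (auto simp: mult.assoc)
    also have "2^k * (1/4)^k = ((1/2::real)^k)" by (simp add: power_mult_distrib[symmetric])
    finally show "ennreal (2^k) * Q ((A ^^ k) g) \<le> ennreal ((1/2)^k) * Q g" .
  qed auto
  also have "\<dots> = ennreal (\<Sum>k. (1/2)^k) * Q g"
    by (subst ennreal_suminf_multc, subst suminf_ennreal2) (auto simp: summable_geometric)
  also have "\<dots> = 2 * Q g" by (simp add: suminf_geometric)
  finally show int: "(\<integral>\<^sup>+t. (\<Sum>k. ennreal (2^k * ((A ^^ k) g t)\<^sup>2)) \<partial>M) \<le> 2 * Q g" .
  have "(\<integral>\<^sup>+t. (\<Sum>k. ennreal (2^k * ((A ^^ k) g t)\<^sup>2)) \<partial>M) \<noteq> \<infinity>"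
  proof -
    have "2 * Q g < \<infinity>" unfolding infinity_ennreal_def ennreal_mult_less_top using gQ[unfolded infinity_ennreal_def] ennreal_numeral_less_top by blast
    from le_less_trans[OF int this] show ?thesis by (rule less_imp_neq)
  qed
  then have "AE t in M. (\<Sum>k. ennreal (2^k * ((A ^^ k) g t)\<^sup>2)) \<noteq> \<infinity>"
    by (rule nn_integral_PInf_AE[OF meas_S[OF g]])
  then show "AE t in M. summable (\<lambda>k. (A ^^ k) g t) \<and>
           ennreal ((\<Sum>k. (A ^^ k) g t)\<^sup>2) \<le> 2 * (\<Sum>k. ennreal (2^k * ((A ^^ k) g t)\<^sup>2))"
  proof eventually_elim
    case (elim t)
    have s: "summable (\<lambda>k. 2^k * ((A ^^ k) g t)\<^sup>2)"
      using elim by (intro summable_suminf_not_top) auto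
    note cs = cs_series[OF s]
    have "ennreal ((\<Sum>k. (A ^^ k) g t)\<^sup>2) \<le> ennreal (2 * (\<Sum>k. 2^k * ((A ^^ k) g t)\<^sup>2))"
      using cs(2) by (rule ennreal_leI)
    also have "\<dots> = ennreal 2 * ennreal (\<Sum>k. 2^k * ((A ^^ k) g t)\<^sup>2)"
      by (rule ennreal_mult) (auto intro: suminf_nonneg[OF s])
    also have "ennreal (\<Sum>k. 2^k * ((A ^^ k) g t)\<^sup>2) = (\<Sum>k. ennreal (2^k * ((A ^^ k) g t)\<^sup>2))"
      by (rule suminf_ennreal2[symmetric]) (auto intro: s)
    finally show ?case using cs(1) by simp
  qed
qed

lemma meas_U[measurable]: "g \<in> borel_measurable M \<Longrightarrow> U g \<in> borel_measurable M"
  unfolding Uop_def by measurable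

lemma U_summable: "L2 I g \<Longrightarrow> AE t in M. summable (\<lambda>k. (A ^^ k) g t)"
proof -
  assume "L2 I g"
  then have g: "g \<in> borel_measurable M" and gQ: "Q g < \<infinity>" unfolding L2_iff by auto
  show ?thesis using series_main(2)[OF g gQ] by (rule eventually_mono) blast
qed

lemma U_Q: assumes "L2 I g" shows "Q (U g) \<le> 4 * Q g"
proof -
  have g[measurable]: "g \<in> borel_measurable M" and gQ: "Q g < \<infinity>" using assms unfolding L2_iff by auto
  have "Q (U g) \<le> (\<integral>\<^sup>+t. 2 * (\<Sum>k. ennreal (2^k * ((A ^^ k) g t)\<^sup>2)) \<partial>M)"
    unfolding Q_def Uop_def
    by (rule nn_integral_mono_AE) (use series_main(2)[OF g gQ] in \<open>rule eventually_mono, blast\<close>)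
  also have "\<dots> = 2 * (\<integral>\<^sup>+t. (\<Sum>k. ennreal (2^k * ((A ^^ k) g t)\<^sup>2)) \<partial>M)"
    by (rule nn_integral_cmult) (rule meas_S[OF g])
  also have "\<dots> \<le> 2 * (2 * Q g)" by (rule mult_left_mono[OF series_main(1)[OF g gQ]]) simp
  also have "\<dots> = 4 * Q g" by (simp add: mult.assoc[symmetric])
  finally show ?thesis .
qed


lemma norm_from_Q:
  assumes u: "u \<in> borel_measurable M" and v: "v \<in> borel_measurable M"
    and C: "C \<ge> 0" and le: "Q u \<le> ennreal C * Q v" and vQ: "Q v < \<infinity>"
  shows "l2_norm I u \<le> sqrt C * l2_norm I v"
proof -
  have fin: "ennreal C * Q v < top"
    unfolding ennreal_mult_less_top using vQ[unfolded infinity_ennreal_def] by auto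
  have "enn2real (Q u) \<le> enn2real (ennreal C * Q v)"
    by (rule enn2real_mono[OF le fin])
  also have "\<dots> = C * enn2real (Q v)" using C by (simp add: enn2real_mult)
  finally have "sqrt (enn2real (Q u)) \<le> sqrt (C * enn2real (Q v))" by simp
  then show ?thesis unfolding l2_norm_Q[OF u] l2_norm_Q[OF v] by (simp add: real_sqrt_mult)
qed

lemma l2_norm_cong:
  assumes "u \<in> borel_measurable M" "v \<in> borel_measurable M" "AE t in M. u t = v t"
  shows "l2_norm I u = l2_norm I v"
proof -
  have "(LINT t|M. (u t)\<^sup>2) = (LINT t|M. (v t)\<^sup>2)"
    by (rule integral_cong_AE) (use assms in \<open>measurable, auto elim: eventually_mono\<close>)
  then show ?thesis by (simp add: l2_norm_def)
qed

lemma Q_diff: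
  assumes u[measurable]: "u \<in> borel_measurable M" and v[measurable]: "v \<in> borel_measurable M"
  shows "Q (\<lambda>t. u t - v t) \<le> 2 * Q u + 2 * Q v"
proof -
  have "Q (\<lambda>t. u t - v t) \<le> (\<integral>\<^sup>+t. 2 * ennreal ((u t)\<^sup>2) + 2 * ennreal ((v t)\<^sup>2) \<partial>M)"
    unfolding Q_def
  proof (rule nn_integral_mono)
    fix t
    have "(u t - v t)\<^sup>2 \<le> 2 * (u t)\<^sup>2 + 2 * (v t)\<^sup>2"
      using zero_le_power2[of "u t + v t"] by (simp add: power2_diff power2_sum)
    then have "ennreal ((u t - v t)\<^sup>2) \<le> ennreal (2 * (u t)\<^sup>2 + 2 * (v t)\<^sup>2)" by (rule ennreal_leI)
    also have "\<dots> = ennreal (2 * (u t)\<^sup>2) + ennreal (2 * (v t)\<^sup>2)"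
      by (rule ennreal_plus) auto
    also have "\<dots> = 2 * ennreal ((u t)\<^sup>2) + 2 * ennreal ((v t)\<^sup>2)"
      by (simp add: ennreal_mult)
    finally show "ennreal ((u t - v t)\<^sup>2) \<le> 2 * ennreal ((u t)\<^sup>2) + 2 * ennreal ((v t)\<^sup>2)" .
  qed
  also have "\<dots> = 2 * Q u + 2 * Q v"
    unfolding Q_def by (subst nn_integral_add) (auto simp: nn_integral_cmult)
  finally show ?thesis .
qed

lemma V_Q: assumes g[measurable]: "g \<in> borel_measurable M" shows "Q (V g) \<le> 4 * Q g"
proof -
  have e: "V g = (\<lambda>t. g t - A g t)" by (simp add: fun_eq_iff Vop_def)
  have "Q (V g) \<le> 2 * Q g + 2 * Q (A g)" unfolding e by (rule Q_diff) measurable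
  also have "Q (A g) \<le> Q g"
  proof -
    have "Q (A g) \<le> ennreal (1/4) * Q g" by (rule A_contr[OF g])
    also have "\<dots> \<le> 1 * Q g" by (rule mult_right_mono) auto
    finally show ?thesis by simp
  qed
  then have "2 * Q g + 2 * Q (A g) \<le> 2 * Q g + 2 * Q g" by (intro add_left_mono mult_left_mono) auto
  also have "\<dots> = 4 * Q g" by (simp add: distrib_right[symmetric])
  finally show ?thesis by simp
qed

lemma Q_fin4: "Q g < \<infinity> \<Longrightarrow> 4 * Q g < \<infinity>"
  unfolding infinity_ennreal_def ennreal_mult_less_top using ennreal_numeral_less_top by blast

lemma bounded_U: "bounded_op I U"
  unfolding bounded_op_def
proof (intro conjI allI impI)
  fix g assume g: "L2 I g"
  then have gm: "g \<in> borel_measurable M" and gQ: "Q g < \<infinity>" by (auto simp: L2_iff)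
  show "L2 I (U g)" unfolding L2_iff using meas_U[OF gm] U_Q[OF g] Q_fin4[OF gQ] by (auto intro: le_less_trans)
next
  fix g h :: "real \<Rightarrow> real" and a b :: real assume g: "L2 I g" and h: "L2 I h"
  show "AE t in M. U (\<lambda>s. a * g s + b * h s) t = a * U g t + b * U h t"
    using U_summable[OF g] U_summable[OF h]
  proof eventually_elim
    case (elim t)
    have "U (\<lambda>s. a * g s + b * h s) t = (\<Sum>k. a * (A ^^ k) g t + b * (A ^^ k) h t)"
      unfolding Uop_def Ak_lin ..
    also have "\<dots> = (\<Sum>k. a * (A ^^ k) g t) + (\<Sum>k. b * (A ^^ k) h t)"
      by (rule suminf_add[symmetric]) (use elim in \<open>auto intro: summable_mult\<close>)
    also have "\<dots> = a * U g t + b * U h t"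
      unfolding Uop_def by (simp add: suminf_mult elim)
    finally show ?case .
  qed
next
  show "\<exists>C. \<forall>g. L2 I g \<longrightarrow> l2_norm I (U g) \<le> C * l2_norm I g"
  proof (intro exI allI impI)
    fix g assume g: "L2 I g"
    then have gm: "g \<in> borel_measurable M" and gQ: "Q g < \<infinity>" by (auto simp: L2_iff)
    have "l2_norm I (U g) \<le> sqrt 4 * l2_norm I g"
      by (rule norm_from_Q[OF meas_U[OF gm] gm _ _ gQ]) (use U_Q[OF g] in auto)
    then show "l2_norm I (U g) \<le> 2 * l2_norm I g" by simp
  qed
qed

lemma meas_V[measurable]: "g \<in> borel_measurable M \<Longrightarrow> V g \<in> borel_measurable M"
proof -
  assume g: "g \<in> borel_measurable M"
  have e: "V g = (\<lambda>t. g t - A g t)" by (simp add: fun_eq_iff Vop_def)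
  show ?thesis unfolding e using meas_A[OF g] g by measurable
qed

lemma bounded_V: "bounded_op I V"
  unfolding bounded_op_def
proof (intro conjI allI impI)
  fix g assume g: "L2 I g"
  then have gm: "g \<in> borel_measurable M" and gQ: "Q g < \<infinity>" by (auto simp: L2_iff)
  show "L2 I (V g)" unfolding L2_iff using meas_V[OF gm] V_Q[OF gm] Q_fin4[OF gQ] by (auto intro: le_less_trans)
next
  fix g h :: "real \<Rightarrow> real" and a b :: real assume g: "L2 I g" and h: "L2 I h"
  show "AE t in M. V (\<lambda>s. a * g s + b * h s) t = a * V g t + b * V h t"
    by (rule AE_I2) (simp add: Vop_def A_lin algebra_simps)
next
  show "\<exists>C. \<forall>g. L2 I g \<longrightarrow> l2_norm I (V g) \<le> C * l2_norm I g"
  proof (intro exI allI impI)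
    fix g assume g: "L2 I g"
    then have gm: "g \<in> borel_measurable M" and gQ: "Q g < \<infinity>" by (auto simp: L2_iff)
    have "l2_norm I (V g) \<le> sqrt 4 * l2_norm I g"
      by (rule norm_from_Q[OF meas_V[OF gm] gm _ _ gQ]) (use V_Q[OF gm] in auto)
    then show "l2_norm I (V g) \<le> 2 * l2_norm I g" by simp
  qed
qed

lemma VU: assumes g: "L2 I g" shows "AE t in M. V (U g) t = g t"
  using U_summable[OF g] AE_transfer[OF U_summable[OF g]]
proof eventually_elim
  case (elim t)
  have "A (U g) t = (\<Sum>n\<in>{1..N}. \<Sum>k. if t \<in> Iseg x n then \<alpha> n (L n t) * (A ^^ k) g (L n t) else 0)"
    unfolding Aop_def[of x N \<alpha> "U g"]
  proof (rule sum.cong)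
    fix n assume n: "n \<in> {1..N}"
    show "(if t \<in> Iseg x n then \<alpha> n (L n t) * U g (L n t) else 0) =
        (\<Sum>k. if t \<in> Iseg x n then \<alpha> n (L n t) * (A ^^ k) g (L n t) else 0)"
      using elim(2) n by (auto simp: Uop_def suminf_mult)
  qed simp
  also have "\<dots> = (\<Sum>k. \<Sum>n\<in>{1..N}. if t \<in> Iseg x n then \<alpha> n (L n t) * (A ^^ k) g (L n t) else 0)"
  proof (rule suminf_sum[symmetric])
    fix n assume n: "n \<in> {1..N}"
    show "summable (\<lambda>k. if t \<in> Iseg x n then \<alpha> n (L n t) * (A ^^ k) g (L n t) else 0)"
      using elim(2) n by (cases "t \<in> Iseg x n") (auto intro: summable_mult)
  qed
  also have "\<dots> = (\<Sum>k. (A ^^ Suc k) g t)"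
    by (simp add: Aop_def)
  also have "\<dots> = U g t - g t"
    unfolding Uop_def by (subst suminf_split_head[OF elim(1)]) simp
  finally show ?case by (simp add: Vop_def)
qed

lemma UV: assumes g: "L2 I g" shows "AE t in M. U (V g) t = g t"
  using U_summable[OF g]
proof eventually_elim
  case (elim t)
  have e: "V g = (\<lambda>s. g s - A g s)" by (simp add: fun_eq_iff Vop_def)
  have s2: "summable (\<lambda>k. (A ^^ Suc k) g t)" using elim by (subst summable_Suc_iff)
  have "U (V g) t = (\<Sum>k. (A ^^ k) g t - (A ^^ Suc k) g t)"
    unfolding Uop_def e Ak_diff by (simp add: funpow_swap1)
  also have "\<dots> = (\<Sum>k. (A ^^ k) g t) - (\<Sum>k. (A ^^ Suc k) g t)"
    by (rule suminf_diff[symmetric, OF elim s2])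
  also have "\<dots> = g t" by (subst suminf_split_head[OF elim]) simp
  finally show ?case .
qed

lemma uniq:
  assumes d: "L2 I d" and fix_d: "AE t in M. d t = A d t"
  shows "AE t in M. d t = 0"
proof -
  have dm[measurable]: "d \<in> borel_measurable M" and dQ: "Q d < \<infinity>" using d by (auto simp: L2_iff)
  have "Q d = Q (A d)" unfolding Q_def by (rule nn_integral_cong_AE) (use fix_d in \<open>auto elim: eventually_mono\<close>)
  also have "\<dots> \<le> ennreal (1/4) * Q d" by (rule A_contr[OF dm])
  finally have le: "Q d \<le> ennreal (1/4) * Q d" .
  have fin: "ennreal (1/4) * Q d < top"
    unfolding ennreal_mult_less_top using dQ[unfolded infinity_ennreal_def] by auto
  have "enn2real (Q d) \<le> enn2real (ennreal (1/4) * Q d)" by (rule enn2real_mono[OF le fin])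
  then have "enn2real (Q d) \<le> 1/4 * enn2real (Q d)" by (simp add: enn2real_mult)
  moreover have "enn2real (Q d) \<ge> 0" by simp
  ultimately have "enn2real (Q d) = 0" by linarith
  then have "Q d = 0" using dQ by (auto simp: enn2real_eq_0_iff infinity_ennreal_def)
  then have "AE t in M. ennreal ((d t)\<^sup>2) = 0"
    unfolding Q_def by (subst (asm) nn_integral_0_iff_AE) auto
  then show ?thesis by (rule eventually_mono) simp
qed

lemma fT: "fractal_T x N \<alpha> f (\<lambda>_. 0) g t = f t + A g t"
  unfolding fractal_T_def Aop_def by (intro arg_cong2[where f="(+)"] refl sum.cong) auto

lemma main:
  assumes onb: "orthonormal_basis I f" and hfix: "\<And>m. is_fractal x N \<alpha> (f m) (\<lambda>_. 0) (h m)"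
  shows "bounded_seq I h \<and> riesz_basis I h"
proof -
  have fL2: "L2 I (f m)" for m using onb by (simp add: orthonormal_basis_def)
  have fn: "l2_norm I (f m) = 1" for m
    using onb unfolding orthonormal_basis_def l2_inner_def l2_norm_def by (simp add: power2_eq_square)
  have hL2: "L2 I (h m)" for m using hfix[of m] by (simp add: is_fractal_def)
  have hfp: "AE t in M. h m t = f m t + A (h m) t" for m using hfix[of m] by (simp add: is_fractal_def fT)
  have fm[measurable]: "f m \<in> borel_measurable M" for m using fL2 by (simp add: L2_iff)
  have hm[measurable]: "h m \<in> borel_measurable M" for m using hL2 by (simp add: L2_iff)
  have Uf: "AE t in M. U (f m) t = h m t" for m
  proof -
    define d where "d t = h m t - U (f m) t" for t
    have UL2: "L2 I (U (f m))" using bounded_U fL2 by (simp add: bounded_op_def)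
    then have Um[measurable]: "U (f m) \<in> borel_measurable M" and UQ: "Q (U (f m)) < \<infinity>" by (auto simp: L2_iff)
    have hQ: "Q (h m) < \<infinity>" using hL2 by (simp add: L2_iff)
    have dL2: "L2 I d" unfolding L2_iff
    proof
      show "d \<in> borel_measurable M" unfolding d_def by measurable
      have "Q d \<le> 2 * Q (h m) + 2 * Q (U (f m))" unfolding d_def by (rule Q_diff) measurable
      also have "\<dots> < \<infinity>" using hQ UQ
        by (simp add: ennreal_mult_less_top infinity_ennreal_def)
      finally show "Q d < \<infinity>" .
    qed
    have "AE t in M. d t = A d t"
      using hfp[of m] VU[OF fL2[of m]]
    proof eventually_elim
      case (elim t)
      have "A d t = A (h m) t - A (U (f m)) t" unfolding d_def by (rule A_diff)
      then show ?case using elim by (simp add: d_def Vop_def)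
    qed
    from uniq[OF dL2 this] show ?thesis by (rule eventually_mono) (simp add: d_def)
  qed
  have Vh: "AE t in M. V (h m) t = f m t" for m
    using hfp[of m] by (rule eventually_mono) (simp add: Vop_def)
  have bnd: "1/2 \<le> l2_norm I (h m) \<and> l2_norm I (h m) \<le> 2" for m
  proof (intro conjI)
    have "l2_norm I (h m) = l2_norm I (U (f m))"
      by (rule l2_norm_cong) (use Uf[of m] in \<open>auto elim: eventually_mono\<close>)
    also have "\<dots> \<le> 2 * l2_norm I (f m)"
    proof -
      have "Q (U (f m)) \<le> 4 * Q (f m)" by (rule U_Q[OF fL2])
      moreover have "Q (f m) < \<infinity>" using fL2 by (simp add: L2_iff)
      ultimately have "l2_norm I (U (f m)) \<le> sqrt 4 * l2_norm I (f m)"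
        by (intro norm_from_Q) auto
      then show ?thesis by simp
    qed
    finally show "l2_norm I (h m) \<le> 2" using fn by simp
    have "1 = l2_norm I (V (h m))"
      using fn[of m] by (subst l2_norm_cong[OF _ _ Vh[of m]]) auto
    also have "\<dots> \<le> sqrt 4 * l2_norm I (h m)"
    proof (rule norm_from_Q)
      show "Q (V (h m)) \<le> ennreal 4 * Q (h m)" using V_Q[OF hm[of m]] by simp
      show "Q (h m) < \<infinity>" using hL2 by (simp add: L2_iff)
    qed auto
    finally show "1/2 \<le> l2_norm I (h m)" by simp
  qed
  have bs: "bounded_seq I h"
    unfolding bounded_seq_def
    by (rule exI[of _ "1/2"], rule exI[of _ 2]) (use bnd in auto)
  have rb: "riesz_basis I h"
    unfolding riesz_basis_def
    using onb bounded_U bounded_V UV VU Uf by blast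
  show ?thesis using bs rb by simp
qed
end

theorem corollary6p15:
  fixes N :: nat and x :: "nat \<Rightarrow> real" and \<alpha> :: "nat \<Rightarrow> real \<Rightarrow> real"
    and f h :: "nat \<Rightarrow> real \<Rightarrow> real"
  assumes "N \<ge> 2"
    and "\<And>i. i < N \<Longrightarrow> x i < x (Suc i)"
    and "\<And>n. n \<in> {1..N} \<Longrightarrow> \<alpha> n \<in> borel_measurable (lebesgue_on {x 0 .. x N})"
    and "(SUP n\<in>{1..N}. esssup (lebesgue_on {x 0 .. x N}) (\<lambda>t. ereal \<bar>\<alpha> n t\<bar>)) < 1/2"
    and "orthonormal_basis {x 0 .. x N} f"
    and "\<And>m. is_fractal x N \<alpha> (f m) (\<lambda>_. 0) (h m)"
  shows "bounded_seq {x 0 .. x N} h \<and> riesz_basis {x 0 .. x N} h"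
  proof -
  have bnd: "AE t in lebesgue_on {x 0..x N}. \<bar>\<alpha> n t\<bar> \<le> 1/2" if n: "n \<in> {1..N}" for n
  proof -
    have "esssup (lebesgue_on {x 0..x N}) (\<lambda>t. ereal \<bar>\<alpha> n t\<bar>)
        \<le> (SUP n\<in>{1..N}. esssup (lebesgue_on {x 0 .. x N}) (\<lambda>t. ereal \<bar>\<alpha> n t\<bar>))"
      by (rule SUP_upper[OF n])
    then have lt: "esssup (lebesgue_on {x 0..x N}) (\<lambda>t. ereal \<bar>\<alpha> n t\<bar>) < 1/2"
      using assms(4) by (rule le_less_trans)
    have half: "(1/2::ereal) = ereal (1/2)" by (simp add: one_ereal_def)
    show ?thesis using esssup_AE[of "\<lambda>t. ereal \<bar>\<alpha> n t\<bar>" "lebesgue_on {x 0..x N}"]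
    proof eventually_elim
      case (elim t)
      then have "ereal \<bar>\<alpha> n t\<bar> < ereal (1/2)" using lt unfolding half by (rule le_less_trans)
      then show ?case by simp
    qed
  qed
  interpret fsetting N x \<alpha>
    using assms(1,2,3) bnd by unfold_locales auto
  show ?thesis using main[OF assms(5,6)] .
qed

end
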